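(* Let $P:\mathfrak m\to\mathfrak m$ be $P(Z)=\mathrm{ad}_\Upsilon\mathrm{Ad}_{\exp Z}\Upsilon$. Then (1) $P(JZ)=JP(Z)$ for all $Z\in\mathfrak m$; (2) if $Z\in\mathfrak m^+$ or $Z\in\mathfrak m^-$, then $P(Z)=Z$; (3) $P$ is an odd function.
   Context: Let $G$ be a simple complex algebraic group with Lie algebra $\mathfrak g$ and an algebraic involution with $\pm1$-eigenspace decomposition $\mathfrak g=\mathfrak k\oplus\mathfrak m$, arising from an irreducible Hermitian symmetric space: $\Upsilon$ lies in the center of $\mathfrak k$ and $\mathrm{ad}_\Upsilon$ has eigenvalues $\pm i$ on $\mathfrak m$, with eigenspaces $\mathfrak m^+$ ($+i$) and $\mathfrak m^-$ ($-i$); $J=\mathrm{ad}_\Upsilon|_{\mathfrak m}$. (Since $\mathrm{ad}_\Upsilon$ kills $\mathfrak k$ and preserves $\mathfrak m$, $P$ takes values in $\mathfrak m$.) *)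

theory Defs
  imports "HOL-Analysis.Analysis"
begin

text \<open>A finite-dimensional complex Lie algebra is modelled on the coordinate space
  complex^'n (any finite index type 'n), with complex scalar multiplication c *s x.\<close>

definition csubspace :: "(complex^'n) set \<Rightarrow> bool" where
  "csubspace S \<longleftrightarrow> 0 \<in> S \<and> (\<forall>x\<in>S. \<forall>y\<in>S. x + y \<in> S) \<and> (\<forall>c. \<forall>x\<in>S. c *s x \<in> S)"

definition clinear_map :: "(complex^'n \<Rightarrow> complex^'n) \<Rightarrow> bool" where
  "clinear_map f \<longleftrightarrow> (\<forall>x y. f (x + y) = f x + f y) \<and> (\<forall>c x. f (c *s x) = c *s f x)"

definition lie_algebra :: "(complex^'n \<Rightarrow> complex^'n \<Rightarrow> complex^'n) \<Rightarrow> bool" where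
  "lie_algebra br \<longleftrightarrow>
     (\<forall>x y z. br (x + y) z = br x z + br y z) \<and>
     (\<forall>c x y. br (c *s x) y = c *s br x y) \<and>
     (\<forall>x y. br x y = - br y x) \<and>
     (\<forall>x y z. br x (br y z) + br y (br z x) + br z (br x y) = 0)"

definition lie_ideal :: "(complex^'n \<Rightarrow> complex^'n \<Rightarrow> complex^'n) \<Rightarrow> (complex^'n) set \<Rightarrow> bool" where
  "lie_ideal br I \<longleftrightarrow> csubspace I \<and> (\<forall>x y. y \<in> I \<longrightarrow> br x y \<in> I)"

definition simple_lie_algebra :: "(complex^'n \<Rightarrow> complex^'n \<Rightarrow> complex^'n) \<Rightarrow> bool" where
  "simple_lie_algebra br \<longleftrightarrow> lie_algebra br \<and> (\<exists>x y. br x y \<noteq> 0) \<and>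
     (\<forall>I. lie_ideal br I \<longrightarrow> I = {0} \<or> I = UNIV)"

text \<open>Involutive Lie algebra automorphism (differential of the algebraic involution of G).\<close>
definition lie_involution :: "(complex^'n \<Rightarrow> complex^'n \<Rightarrow> complex^'n) \<Rightarrow> (complex^'n \<Rightarrow> complex^'n) \<Rightarrow> bool" where
  "lie_involution br \<theta> \<longleftrightarrow> clinear_map \<theta> \<and> (\<forall>x y. \<theta> (br x y) = br (\<theta> x) (\<theta> y)) \<and> (\<forall>x. \<theta> (\<theta> x) = x)"

text \<open>Ad_{exp Z} X = exp(ad_Z) X, written as the exponential series.\<close>
definition Ad_exp :: "(complex^'n \<Rightarrow> complex^'n \<Rightarrow> complex^'n) \<Rightarrow> complex^'n \<Rightarrow> complex^'n \<Rightarrow> complex^'n" where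
  "Ad_exp br Z X = (\<Sum>k. inverse (fact k) *\<^sub>R ((br Z ^^ k) X))"

end

theory Submission
  imports Defs
begin

lemma smult_neg1: "(-1::complex) *s x = - x" by (simp add: vec_eq_iff)
lemma scaleR_smult: "r *\<^sub>R (x::complex^'n) = complex_of_real r *s x"
proof (rule vec_eq_iff[THEN iffD2, rule_format])
  fix i show "(r *\<^sub>R x) $ i = (complex_of_real r *s x) $ i" by (simp only: vector_scaleR_component vector_smult_component) (simp add: scaleR_conv_of_real)
qed

lemma clin_bl:
  fixes f :: "complex^'n \<Rightarrow> complex^'n"
  assumes "\<And>x y. f (x + y) = f x + f y" "\<And>c x. f (c *s x) = c *s f x"
  shows "bounded_linear f"
proof -
  have "linear f" by (rule linearI) (auto simp: assms scaleR_smult)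
  then show ?thesis by (simp add: linear_conv_bounded_linear)
qed

lemma exp_summable:
  fixes L :: "'a::euclidean_space \<Rightarrow> 'a"
  assumes "bounded_linear L"
  shows "summable (\<lambda>k. inverse (fact k) *\<^sub>R (L ^^ k) x)"
proof -
  obtain K where K: "K > 0" "\<And>x. norm (L x) \<le> norm x * K"
    using bounded_linear.pos_bounded[OF assms] by blast
  have pw: "norm ((L ^^ k) x) \<le> K ^ k * norm x" for k
  proof (induction k)
    case 0 then show ?case by simp
  next
    case (Suc k)
    have "norm ((L ^^ Suc k) x) \<le> norm ((L ^^ k) x) * K" using K(2) by simp
    also have "\<dots> \<le> K ^ k * norm x * K" using Suc K(1) by (simp add: mult_right_mono)
    finally show ?case by (simp add: algebra_simps)
  qed
  have s: "summable (\<lambda>k. norm x * (K ^ k /\<^sub>R fact k))"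
    by (intro summable_mult summable_exp_generic)
  show ?thesis
  proof (rule summable_comparison_test[OF _ s], intro exI allI impI)
    fix k :: nat
    have "norm (inverse (fact k) *\<^sub>R (L ^^ k) x) = inverse (fact k) * norm ((L ^^ k) x)"
      by simp
    also have "\<dots> \<le> inverse (fact k) * (K ^ k * norm x)" using pw by (simp add: mult_left_mono)
    finally show "norm (inverse (fact k) *\<^sub>R (L ^^ k) x) \<le> norm x * (K ^ k /\<^sub>R fact k)"
      by (simp add: field_simps)
  qed
qed

context
  fixes br :: "complex^'n \<Rightarrow> complex^'n \<Rightarrow> complex^'n"
  assumes la: "lie_algebra br"
begin
lemma add1: "br (x+y) z = br x z + br y z" using la unfolding lie_algebra_def by blast
lemma smul1: "br (c *s x) y = c *s br x y" using la unfolding lie_algebra_def by blast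
lemma anti: "br x y = - br y x" using la unfolding lie_algebra_def by blast
lemma jac: "br x (br y z) + br y (br z x) + br z (br x y) = 0" using la unfolding lie_algebra_def by blast
lemma add2: "br x (y+z) = br x y + br x z"
  by (metis add1 anti minus_add_distrib)
lemma smul2: "br x (c *s y) = c *s br x y"
proof -
  have "br x (c *s y) = - (c *s br y x)" by (metis anti smul1)
  also have "\<dots> = c *s (- br y x)" by (simp add: vec_eq_iff)
  finally show ?thesis by (metis anti)
qed
lemma neg1: "br (-x) y = - br x y" by (metis smult_neg1 smul1)
lemma neg2: "br x (-y) = - br x y" by (metis smult_neg1 smul2)
lemma self0: "br x x = 0"
proof -
  have "br x x = - br x x" by (rule anti)
  then show ?thesis by (simp add: vec_eq_iff)
qed
lemma diff2: "br x (y - z) = br x y - br x z"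
  by (metis add2 neg2 diff_conv_add_uminus)
lemma zero1: "br 0 y = 0" by (metis add1 add_cancel_right_right)
lemma zero2: "br x 0 = 0" by (metis add2 add_cancel_right_right)
lemma bl2: "bounded_linear (br x)" by (rule clin_bl) (auto simp: add2 smul2)
lemma jac2: "br u (br v w) = br (br u v) w + br v (br u w)"
proof -
  have "br v (br w u) = - br v (br u w)" by (metis anti neg2)
  moreover have "br w (br u v) = - br (br u v) w" by (metis anti)
  moreover have "br u (br v w) = - br v (br w u) - br w (br u v)"
    using jac[of u v w] by (simp add: eq_neg_iff_add_eq_0 algebra_simps)
  ultimately show ?thesis by simp
qed
end
theorem lemma4p11:
  fixes br :: "complex^'n \<Rightarrow> complex^'n \<Rightarrow> complex^'n"
    and \<theta> :: "complex^'n \<Rightarrow> complex^'n"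
    and \<Upsilon> :: "complex^'n"
    and k m mplus mminus :: "(complex^'n) set"
    and J P :: "complex^'n \<Rightarrow> complex^'n"
  assumes simple: "simple_lie_algebra br"
    and inv: "lie_involution br \<theta>"
    and k_def: "k = {X. \<theta> X = X}"
    and m_def: "m = {X. \<theta> X = - X}"
    and Ups_k: "\<Upsilon> \<in> k"
    and Ups_central: "\<forall>X\<in>k. br \<Upsilon> X = 0"
    and mplus_def: "mplus = {X \<in> m. br \<Upsilon> X = \<i> *s X}"
    and mminus_def: "mminus = {X \<in> m. br \<Upsilon> X = - \<i> *s X}"
    and m_decomp: "\<forall>X\<in>m. \<exists>A\<in>mplus. \<exists>B\<in>mminus. X = A + B"
    and mplus_nz: "mplus \<noteq> {0}"
    and mminus_nz: "mminus \<noteq> {0}"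
    and J_def: "\<forall>Z. J Z = br \<Upsilon> Z"
    and P_def: "\<forall>Z. P Z = br \<Upsilon> (Ad_exp br Z \<Upsilon>)"
  shows "(\<forall>Z\<in>m. P (J Z) = J (P Z))
       \<and> (\<forall>Z. Z \<in> mplus \<or> Z \<in> mminus \<longrightarrow> P Z = Z)
       \<and> (\<forall>Z\<in>m. P (- Z) = - P Z)"
proof -
  have la: "lie_algebra br" using simple by (simp add: simple_lie_algebra_def)
  note L = add1[OF la] add2[OF la] smul1[OF la] smul2[OF la] neg1[OF la] neg2[OF la]
    self0[OF la] diff2[OF la] zero1[OF la] zero2[OF la]
  have thadd: "\<theta> (x + y) = \<theta> x + \<theta> y" for x y using inv by (simp add: lie_involution_def clinear_map_def)
  have thsm: "\<theta> (c *s x) = c *s \<theta> x" for c x using inv by (simp add: lie_involution_def clinear_map_def)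
  have thhom: "\<theta> (br x y) = br (\<theta> x) (\<theta> y)" for x y using inv by (simp add: lie_involution_def)
  have thinv: "\<theta> (\<theta> x) = x" for x using inv by (simp add: lie_involution_def)
  have thneg: "\<theta> (- x) = - \<theta> x" for x by (metis smult_neg1 thsm)
  have Uth: "\<theta> \<Upsilon> = \<Upsilon>" using Ups_k k_def by simp
  have Uk: "br \<Upsilon> X = 0" if "X \<in> k" for X using Ups_central that by blast
  have brkm: "br Z X \<in> m" if "X \<in> k" "Z \<in> m" for X Z
    using that by (simp add: k_def m_def thhom L)
  have brmm: "br Z X \<in> k" if "X \<in> m" "Z \<in> m" for X Z
    using that by (simp add: k_def m_def thhom L)
  have parity: "(br Z ^^ j) \<Upsilon> \<in> (if even j then k else m)" if "Z \<in> m" for Z j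
  proof (induction j)
    case 0 then show ?case using Ups_k by simp
  next
    case (Suc j) then show ?case using brkm brmm \<open>Z \<in> m\<close> by (auto split: if_splits)
  qed
  have blU: "bounded_linear (br \<Upsilon>)" by (rule bl2[OF la])
  have summ: "summable (\<lambda>j. inverse (fact j) *\<^sub>R (br Z ^^ j) X)" for Z X
    by (rule exp_summable[OF bl2[OF la]])
  have Pexp: "P Z = br \<Upsilon> (\<Sum>j. inverse (fact j) *\<^sub>R (br Z ^^ j) \<Upsilon>)" for Z
    using P_def by (simp add: Ad_exp_def)
  have part3: "P (- Z) = - P Z" if Zm: "Z \<in> m" for Z
  proof -
    define f where "f j = inverse (fact j) *\<^sub>R (br Z ^^ j) \<Upsilon>" for j
    define g where "g j = inverse (fact j) *\<^sub>R (br (-Z) ^^ j) \<Upsilon>" for j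
    have negpow: "(br (-Z) ^^ j) X = (-1)^j *s (br Z ^^ j) X" for j X
    proof (induction j)
      case 0 then show ?case by (simp add: vec_eq_iff)
    next
      case (Suc j)
      have "(br (-Z) ^^ Suc j) X = br (-Z) ((-1)^j *s (br Z ^^ j) X)" using Suc by simp
      also have "\<dots> = (-1)^j *s (- br Z ((br Z ^^ j) X))" by (simp add: L)
      also have "\<dots> = (-1)^(Suc j) *s (br Z ^^ Suc j) X" by (simp add: vec_eq_iff)
      finally show ?case .
    qed
    have gf: "br \<Upsilon> (g j) = - br \<Upsilon> (f j)" for j
    proof (cases "even j")
      case True
      then have "(br Z ^^ j) \<Upsilon> \<in> k" using parity[OF Zm, of j] by simp
      then have "br \<Upsilon> ((br Z ^^ j) \<Upsilon>) = 0" by (rule Uk)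
      then show ?thesis using True unfolding f_def g_def negpow
        by (simp add: linear_simps[OF blU] L)
    next
      case False
      then have "g j = - f j" unfolding f_def g_def negpow by (simp add: smult_neg1)
      then show ?thesis by (simp add: linear_simps[OF blU])
    qed
    have "P (- Z) = (\<Sum>j. br \<Upsilon> (g j))"
      unfolding Pexp g_def by (rule bounded_linear.suminf[OF blU summ])
    also have "\<dots> = (\<Sum>j. - br \<Upsilon> (f j))" by (simp add: gf)
    also have "\<dots> = - (\<Sum>j. br \<Upsilon> (f j))"
      by (rule suminf_minus, rule bounded_linear.summable[OF blU], unfold f_def, rule summ)
    also have "(\<Sum>j. br \<Upsilon> (f j)) = P Z"
      unfolding Pexp f_def by (rule bounded_linear.suminf[OF blU summ, symmetric])
    finally show ?thesis .
  qed
  have part2: "P Z = Z" if Zm: "Z \<in> m" and ev: "br \<Upsilon> Z = c *s Z" and cc: "c * c = -1" for Z c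
  proof -
    have z1: "br Z \<Upsilon> = - (c *s Z)" proof -
      have "br Z \<Upsilon> = - br \<Upsilon> Z" by (rule anti[OF la])
      then show ?thesis using ev by simp
    qed
    have z2: "br Z (br Z \<Upsilon>) = 0" unfolding z1 by (simp add: L vec_eq_iff)
    have z0: "(br Z ^^ i) 0 = 0" for i by (induction i) (simp_all add: L)
    have hi: "(br Z ^^ j) \<Upsilon> = 0" if "j \<notin> {0,1}" for j
    proof -
      have "j = Suc (Suc (j - 2))" using that by auto
      then have "(br Z ^^ j) \<Upsilon> = (br Z ^^ (j - 2)) (br Z (br Z \<Upsilon>))"
        by (metis funpow_Suc_right comp_apply)
      then show ?thesis by (simp add: z2 z0)
    qed
    have "(\<Sum>j. inverse (fact j) *\<^sub>R (br Z ^^ j) \<Upsilon>) = (\<Sum>j\<in>{0,1}. inverse (fact j) *\<^sub>R (br Z ^^ j) \<Upsilon>)"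
      proof (rule suminf_finite)
      fix n :: nat assume "n \<notin> {0,1}"
      then show "inverse (fact n) *\<^sub>R (br Z ^^ n) \<Upsilon> = 0" using hi[of n] by simp
    qed simp
    also have "\<dots> = \<Upsilon> + br Z \<Upsilon>" by simp
    finally have "P Z = br \<Upsilon> \<Upsilon> + br \<Upsilon> (- (c *s Z))" by (simp add: Pexp z1 L)
    also have "\<dots> = - (c *s (c *s Z))" by (simp add: L ev)
    also have "\<dots> = Z" using cc by (simp add: vec_eq_iff mult.assoc[symmetric])
    finally show ?thesis .
  qed
  have P2: "\<forall>Z. Z \<in> mplus \<or> Z \<in> mminus \<longrightarrow> P Z = Z"
  proof (intro allI impI)
    fix Z assume "Z \<in> mplus \<or> Z \<in> mminus"
    then show "P Z = Z"
    proof
      assume "Z \<in> mplus" then show ?thesis using part2[of Z \<i>] mplus_def by simp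
    next
      assume "Z \<in> mminus" then show ?thesis using part2[of Z "- \<i>"] mminus_def by simp
    qed
  qed
  define kp where "kp X = (1/2 :: complex) *s (X + \<theta> X)" for X
  define phi where "phi X = kp X + br \<Upsilon> X" for X
  have kpk: "kp X \<in> k" for X unfolding kp_def k_def by (simp add: thsm thadd thinv add.commute)
  have kpm: "kp X = 0" if "X \<in> m" for X using that unfolding kp_def m_def by simp
  have kpk2: "kp X = X" if "X \<in> k" for X using that unfolding kp_def k_def by (simp add: vec_eq_iff)
  have phim: "phi X = br \<Upsilon> X" if "X \<in> m" for X using that kpm by (simp add: phi_def)
  have phik: "phi X = X" if "X \<in> k" for X using that kpk2 Uk by (simp add: phi_def)
  have blphi: "bounded_linear phi"
    by (rule clin_bl) (auto simp: phi_def kp_def thadd thsm L vec_eq_iff field_simps)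
  have homk: "phi (br Z X) = br (phi Z) (phi X)" if "X \<in> k" "Z \<in> m" for X Z
  proof -
    have "phi (br Z X) = br \<Upsilon> (br Z X)" by (rule phim[OF brkm[OF that]])
    also have "\<dots> = br (br \<Upsilon> Z) X + br Z (br \<Upsilon> X)" by (rule jac2[OF la])
    also have "\<dots> = br (phi Z) (phi X)" using that Uk phim phik by (simp add: L)
    finally show ?thesis .
  qed
  have comm0: "br A C = 0" if "A \<in> m" "C \<in> m" "br \<Upsilon> A = c *s A" "br \<Upsilon> C = c *s C" "c \<noteq> 0" for A C c
  proof -
    have "br A C \<in> k" using brmm that by blast
    then have "0 = br \<Upsilon> (br A C)" using Uk by simp
    also have "\<dots> = br (br \<Upsilon> A) C + br A (br \<Upsilon> C)" by (rule jac2[OF la])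
    also have "\<dots> = (2 * c) *s br A C" by (simp only: that(3) that(4) L) (simp add: vec_eq_iff field_simps)
    finally show ?thesis using that(5) by (simp add: vec_eq_iff)
  qed
  have homm: "phi (br Z X) = br (phi Z) (phi X)" if XZ: "X \<in> m" "Z \<in> m" for X Z
  proof -
    obtain A B where AB: "A \<in> mplus" "B \<in> mminus" "Z = A + B" using bspec[OF m_decomp XZ(2)] by blast
    obtain C D where CD: "C \<in> mplus" "D \<in> mminus" "X = C + D" using bspec[OF m_decomp XZ(1)] by blast
    have mA: "A \<in> m" "C \<in> m" "B \<in> m" "D \<in> m"
      using AB(1,2) CD(1,2) unfolding mplus_def mminus_def by simp_all
    have eA: "br \<Upsilon> A = \<i> *s A" "br \<Upsilon> C = \<i> *s C"
      using AB(1) CD(1) unfolding mplus_def by simp_all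
    have eB: "br \<Upsilon> B = (- \<i>) *s B" "br \<Upsilon> D = (- \<i>) *s D"
      using AB(2) CD(2) unfolding mminus_def by simp_all
    have AC: "br A C = 0" by (rule comm0[OF mA(1,2) eA]) simp
    have BD: "br B D = 0" by (rule comm0[OF mA(3,4) eB]) simp
    have "phi (br Z X) = br Z X" by (rule phik[OF brmm[OF XZ]])
    also have "\<dots> = br A D + br B C" unfolding AB(3) CD(3) by (simp add: L AC BD)
    also have "\<dots> = br (br \<Upsilon> Z) (br \<Upsilon> X)"
      unfolding AB(3) CD(3) by (simp only: L eA eB AC BD) (simp add: vec_eq_iff)
    also have "\<dots> = br (phi Z) (phi X)" by (simp only: phim[OF XZ(1)] phim[OF XZ(2)])
    finally show ?thesis .
  qed
  have iter: "(br (br \<Upsilon> Z) ^^ j) \<Upsilon> = phi ((br Z ^^ j) \<Upsilon>)" if Zm: "Z \<in> m" for Z j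
  proof (induction j)
    case 0 then show ?case using phik Ups_k by simp
  next
    case (Suc j)
    have "(br (br \<Upsilon> Z) ^^ Suc j) \<Upsilon> = br (phi Z) (phi ((br Z ^^ j) \<Upsilon>))"
      using Suc phim Zm by simp
    also have "\<dots> = phi (br Z ((br Z ^^ j) \<Upsilon>))"
      using parity[OF Zm, of j] homk homm Zm by (auto split: if_splits)
    finally show ?case by simp
  qed
  have P1: "P (J Z) = J (P Z)" if Zm: "Z \<in> m" for Z
  proof -
    define W where "W = (\<Sum>j. inverse (fact j) *\<^sub>R (br Z ^^ j) \<Upsilon>)"
    have "(\<Sum>j. inverse (fact j) *\<^sub>R (br (br \<Upsilon> Z) ^^ j) \<Upsilon>)
        = (\<Sum>j. phi (inverse (fact j) *\<^sub>R (br Z ^^ j) \<Upsilon>))"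
      by (simp add: iter[OF Zm] linear_simps[OF blphi])
    also have "\<dots> = phi W" unfolding W_def by (rule bounded_linear.suminf[OF blphi summ, symmetric])
    finally have "P (J Z) = br \<Upsilon> (phi W)" using J_def Pexp by simp
    also have "\<dots> = br \<Upsilon> (br \<Upsilon> W)" using Uk kpk by (simp add: phi_def L)
    also have "\<dots> = J (P Z)" using J_def Pexp W_def by simp
    finally show ?thesis .
  qed
  show ?thesis using P1 P2 part3 by blast
qed

end
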